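(* Let $M=((W,\preccurlyeq),V)$ be an intuitionistic model, $T\subseteq\mathbb{P}$ and $w\in W$ such that (1) $\{v\in W\mid w\preccurlyeq v\}$ has a unique maximal world $u$, and (2) $V(v)=T$ for all $v\in W$ with $w\preccurlyeq v$ and $v\ne w$. Then there exist an HT model $M'=((\{0,1\},\preccurlyeq'),V')$ and a bisimulation $Z\subseteq W\times\{0,1\}$ with $w\,Z\,0$.
   Context: Propositional intuitionistic Kripke semantics over a countable atom set $\mathbb{P}$: an intuitionistic model is $((W,\preccurlyeq),V)$ with $W\ne\emptyset$, $\preccurlyeq$ a partial order and $V:W\to2^{\mathbb{P}}$ monotone along $\preccurlyeq$. A world is maximal if no distinct world lies $\preccurlyeq$-above it. An HT model is an intuitionistic model on the frame $(\{0,1\},\preccurlyeq')$ with $\preccurlyeq'=\{(0,0),(1,1),(0,1)\}$. A bisimulation between $M_1=((W_1,\preccurlyeq_1),V_1)$ and $M_2=((W_2,\preccurlyeq_2),V_2)$ is a relation $Z\subseteq W_1\times W_2$ such that whenever $w_1Zw_2$: (C1) $V_1(w_1)=V_2(w_2)$; (C2) for every $v_1\succcurlyeq_1 w_1$ there is $v_2\succcurlyeq_2w_2$ with $v_1Zv_2$; (C3) for every $v_2\succcurlyeq_2w_2$ there is $v_1\succcurlyeq_1w_1$ with $v_1Zv_2$. *)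

theory Defs
  imports "HOL-Library.Countable"
begin

definition int_model :: "'w set \<Rightarrow> ('w \<times> 'w) set \<Rightarrow> ('w \<Rightarrow> 'p::countable set) \<Rightarrow> bool" where
  "int_model W le V \<longleftrightarrow>
     W \<noteq> {} \<and> le \<subseteq> W \<times> W \<and> refl_on W le \<and> antisym le \<and> trans le \<and>
     (\<forall>w v. (w, v) \<in> le \<longrightarrow> V w \<subseteq> V v)"

definition maximal_world :: "'w set \<Rightarrow> ('w \<times> 'w) set \<Rightarrow> 'w \<Rightarrow> bool" where
  "maximal_world W le u \<longleftrightarrow> u \<in> W \<and> (\<forall>v\<in>W. (u, v) \<in> le \<longrightarrow> v = u)"

definition ht_worlds :: "nat set" where
  "ht_worlds = {0, 1}"

definition ht_le :: "(nat \<times> nat) set" where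
  "ht_le = {(0,0), (1,1), (0,1)}"

definition ht_model :: "(nat \<Rightarrow> 'p::countable set) \<Rightarrow> bool" where
  "ht_model V' \<longleftrightarrow> int_model ht_worlds ht_le V'"

definition bisimulation ::
  "'a set \<Rightarrow> ('a \<times> 'a) set \<Rightarrow> ('a \<Rightarrow> 'p set) \<Rightarrow>
   'b set \<Rightarrow> ('b \<times> 'b) set \<Rightarrow> ('b \<Rightarrow> 'p set) \<Rightarrow> ('a \<times> 'b) set \<Rightarrow> bool" where
  "bisimulation W1 le1 V1 W2 le2 V2 Z \<longleftrightarrow>
     Z \<subseteq> W1 \<times> W2 \<and>
     (\<forall>w1 w2. (w1, w2) \<in> Z \<longrightarrow>
        V1 w1 = V2 w2 \<and>
        (\<forall>v1. (w1, v1) \<in> le1 \<longrightarrow> (\<exists>v2. (w2, v2) \<in> le2 \<and> (v1, v2) \<in> Z)) \<and>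
        (\<forall>v2. (w2, v2) \<in> le2 \<longrightarrow> (\<exists>v1. (w1, v1) \<in> le1 \<and> (v1, v2) \<in> Z)))"

end

theory Submission
  imports Defs
begin

theorem lemma2p7:
  fixes W :: "'w set" and le :: "('w \<times> 'w) set" and V :: "'w \<Rightarrow> 'p::countable set"
    and T :: "'p set" and w :: 'w
  assumes "int_model W le V"
    and "w \<in> W"
    and "\<exists>!u. u \<in> W \<and> (w, u) \<in> le \<and> maximal_world W le u"
    and "\<forall>v\<in>W. (w, v) \<in> le \<and> v \<noteq> w \<longrightarrow> V v = T"
  shows "\<exists>V' :: nat \<Rightarrow> 'p set. \<exists>Z :: ('w \<times> nat) set.
           ht_model V' \<and> bisimulation W le V ht_worlds ht_le V' Z \<and> (w, 0) \<in> Z"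
proof -
  obtain u where u: "u \<in> W" "(w, u) \<in> le" "maximal_world W le u" using assms(3) by blast
  have M: "le \<subseteq> W \<times> W" "refl_on W le" "trans le" "antisym le"
    "\<And>a b. (a, b) \<in> le \<Longrightarrow> V a \<subseteq> V b"
    using assms(1) unfolding int_model_def by blast+
  have wle: "(w,w) \<in> le" using M(2) assms(2) by (simp add: refl_on_def)
  show ?thesis
  proof (cases "u = w")
    case True
    have up: "\<And>v. (w, v) \<in> le \<Longrightarrow> v = w" using u True M(1) unfolding maximal_world_def by blast
    let ?V = "\<lambda>_::nat. V w"
    let ?Z = "{(w,0::nat),(w,1)}"
    have "ht_model ?V" unfolding ht_model_def int_model_def ht_worlds_def ht_le_def
      by (auto simp: refl_on_def antisym_def trans_def)
    moreover have "bisimulation W le V ht_worlds ht_le ?V ?Z"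
      unfolding bisimulation_def ht_worlds_def ht_le_def
      using assms(2) up wle by auto
    ultimately show ?thesis by blast
  next
    case False
    have VT: "V u = T" using assms(4) u False by blast
    have VwT: "V w \<subseteq> T" using M(5)[OF u(2)] VT by simp
    let ?V = "\<lambda>n::nat. if n = 0 then V w else T"
    let ?Z = "{(w,0::nat)} \<union> {(v,1) | v. v \<in> W \<and> (w, v) \<in> le \<and> v \<noteq> w}"
    have "ht_model ?V" unfolding ht_model_def int_model_def ht_worlds_def ht_le_def
      using VwT by (auto simp: refl_on_def antisym_def trans_def)
    moreover have "bisimulation W le V ht_worlds ht_le ?V ?Z"
      unfolding bisimulation_def ht_worlds_def ht_le_def
    proof (rule conjI)
      show "?Z \<subseteq> W \<times> {0, 1}" using assms(2) by auto
    next
      show "\<forall>w1 w2. (w1, w2) \<in> ?Z \<longrightarrow> V w1 = ?V w2 \<and>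
        (\<forall>v1. (w1, v1) \<in> le \<longrightarrow> (\<exists>v2. (w2, v2) \<in> {(0, 0), (1, 1), (0, 1)} \<and> (v1, v2) \<in> ?Z)) \<and>
        (\<forall>v2. (w2, v2) \<in> {(0, 0), (1, 1), (0, 1)} \<longrightarrow> (\<exists>v1. (w1, v1) \<in> le \<and> (v1, v2) \<in> ?Z))"
      proof (intro allI impI)
      fix w1 w2 assume z: "(w1, w2) \<in> ?Z"
      show "V w1 = ?V w2 \<and>
        (\<forall>v1. (w1, v1) \<in> le \<longrightarrow> (\<exists>v2. (w2, v2) \<in> {(0, 0), (1, 1), (0, 1)} \<and> (v1, v2) \<in> ?Z)) \<and>
        (\<forall>v2. (w2, v2) \<in> {(0, 0), (1, 1), (0, 1)} \<longrightarrow> (\<exists>v1. (w1, v1) \<in> le \<and> (v1, v2) \<in> ?Z))"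
      proof (intro conjI)
      show "V w1 = ?V w2" using z assms(4) by auto
      show "\<forall>v1. (w1, v1) \<in> le \<longrightarrow> (\<exists>v2. (w2, v2) \<in> {(0, 0), (1, 1), (0, 1)} \<and> (v1, v2) \<in> ?Z)"
      proof (intro allI impI)
        fix v1 assume h: "(w1, v1) \<in> le"
        have "v1 \<in> W" using h M(1) by blast
        show "\<exists>v2. (w2, v2) \<in> {(0, 0), (1, 1), (0, 1)} \<and> (v1, v2) \<in> ?Z"
        proof (cases "w1 = w")
          case True
          then show ?thesis using z h \<open>v1 \<in> W\<close> by auto
        next
          case F: False
          then have w2: "w2 = 1" "(w, w1) \<in> le" using z by auto
          have "(w, v1) \<in> le" using w2 h M(3) unfolding trans_def by blast
          moreover have "v1 \<noteq> w" using M(4) w2 h F unfolding antisym_def by blast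
          ultimately show ?thesis using w2 \<open>v1 \<in> W\<close> by auto
        qed
      qed
      show "\<forall>v2. (w2, v2) \<in> {(0, 0), (1, 1), (0, 1)} \<longrightarrow> (\<exists>v1. (w1, v1) \<in> le \<and> (v1, v2) \<in> ?Z)"
      proof (intro allI impI)
        fix v2 assume h: "(w2, v2) \<in> {(0::nat, 0::nat), (1, 1), (0, 1)}"
        show "\<exists>v1. (w1, v1) \<in> le \<and> (v1, v2) \<in> ?Z"
        proof (cases "w2 = 0")
          case True
          then have "w1 = w" using z by auto
          then show ?thesis using True h wle u False by auto
        next
          case F: False
          then have "v2 = 1" "w1 \<in> W" "(w1,w1) \<in> le" using h z M(2) by (auto simp: refl_on_def)
          then show ?thesis using z F by auto
        qed
      qed
      qed
      qed
    qed
    moreover have "(w, 0) \<in> ?Z" by simp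
    ultimately show ?thesis by blast
  qed
qed

end
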